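(* For every nonempty team $X$ on a set $\{p_1,\dots,p_n\}$ of propositional variables, the formula $\Theta_X=\bigotimes_{v\in X}(p_1^{v(p_1)}\wedge\dots\wedge p_n^{v(p_n)})$ is $\mathcal{F}$-projective in $\mathbf{PD}$, where $\mathcal F$ is the class of all flat substitutions of $\mathbf{PD}$.
   Context: Here $p^1:=p$, $p^0:=\neg p$, and a team on $V$ is a set of functions $V\to\{0,1\}$. A valuation is a function from the set Prop of propositional variables to $\{0,1\}$; a team is a set of valuations. Formulas of extended propositional dependence logic $\mathbf{PD}$: $\phi::=p\mid\bot\mid\top\mid\,=\!(\alpha_1,\dots,\alpha_k,\beta)\mid\neg\phi\mid\phi\wedge\phi\mid\phi\otimes\phi$ with $\alpha_i,\beta$ flat. Satisfaction on a team $X$: $X\models p$ iff $v(p)=1$ for all $v\in X$; $X\models\bot$ iff $X=\emptyset$; $X\models\top$ always; $\wedge$ conjunction; $X\models\phi\otimes\psi$ iff $X=Y\cup Z$ with $Y\models\phi$, $Z\models\psi$; $X\models\neg\phi$ iff $\{v\}\not\models\phi$ for all $v\in X$; $X\models\,=\!(\vec\alpha,\beta)$ iff for all $v,v'\in X$, if $\{v\}\models\alpha_i\Leftrightarrow\{v'\}\models\alpha_i$ for all $i$, then $\{v\}\models\beta\Leftrightarrow\{v'\}\models\beta$. $\phi$ is flat if for all teams $X$: $X\models\phi$ iff $\{v\}\models\phi$ for all $v\in X$. For finite $\Gamma$, $\Gamma\vdash_{\mathbf{PD}}\phi$ iff all formulas are $\mathbf{PD}$-formulas and every team satisfying all of $\Gamma$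 satisfies $\phi$. A substitution is a map on $\mathbf{PD}$-formulas commuting with all connectives and atoms; it is flat if each $\sigma(p)$ is flat. For a set $\mathcal S$ of substitutions, $\phi$ is $\mathcal S$-projective in $\mathbf{PD}$ if there is $\sigma\in\mathcal S$ with $\vdash_{\mathbf{PD}}\sigma(\phi)$, and $\phi,\sigma(p)\vdash_{\mathbf{PD}}p$ and $\phi,p\vdash_{\mathbf{PD}}\sigma(p)$ for all propositional variables $p$. *)

theory Defs
  imports Main
begin

datatype fml =
    Var nat
  | Bot
  | Top
  | Dep "fml list" fml
  | Neg fml
  | Conj fml fml
  | Tensor fml fml

type_synonym valuation = "nat \<Rightarrow> bool"
type_synonym team = "valuation set"

fun sat :: "team \<Rightarrow> fml \<Rightarrow> bool" where
  "sat X (Var p) = (\<forall>v\<in>X. v p)"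
| "sat X Bot = (X = {})"
| "sat X Top = True"
| "sat X (Dep as b) = (\<forall>v\<in>X. \<forall>v'\<in>X.
      (\<forall>a\<in>set as. sat {v} a = sat {v'} a) \<longrightarrow> (sat {v} b = sat {v'} b))"
| "sat X (Neg f) = (\<forall>v\<in>X. \<not> sat {v} f)"
| "sat X (Conj f g) = (sat X f \<and> sat X g)"
| "sat X (Tensor f g) = (\<exists>Y Z. X = Y \<union> Z \<and> sat Y f \<and> sat Z g)"

definition flat :: "fml \<Rightarrow> bool" where
  "flat f \<longleftrightarrow> (\<forall>X. sat X f = (\<forall>v\<in>X. sat {v} f))"

fun wf :: "fml \<Rightarrow> bool" where
  "wf (Var p) = True"
| "wf Bot = True"
| "wf Top = True"
| "wf (Dep as b) = ((\<forall>a\<in>set as. wf a \<and> flat a) \<and> wf b \<and> flat b)"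
| "wf (Neg f) = wf f"
| "wf (Conj f g) = (wf f \<and> wf g)"
| "wf (Tensor f g) = (wf f \<and> wf g)"

definition entails :: "fml list \<Rightarrow> fml \<Rightarrow> bool" where
  "entails \<Gamma> f \<longleftrightarrow> (\<forall>g\<in>set \<Gamma>. wf g) \<and> wf f \<and>
     (\<forall>X. (\<forall>g\<in>set \<Gamma>. sat X g) \<longrightarrow> sat X f)"

fun subst :: "(nat \<Rightarrow> fml) \<Rightarrow> fml \<Rightarrow> fml" where
  "subst s (Var p) = s p"
| "subst s Bot = Bot"
| "subst s Top = Top"
| "subst s (Dep as b) = Dep (map (subst s) as) (subst s b)"
| "subst s (Neg f) = Neg (subst s f)"
| "subst s (Conj f g) = Conj (subst s f) (subst s g)"
| "subst s (Tensor f g) = Tensor (subst s f) (subst s g)"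

definition is_subst :: "(nat \<Rightarrow> fml) \<Rightarrow> bool" where
  "is_subst s \<longleftrightarrow> (\<forall>f. wf f \<longrightarrow> wf (subst s f))"

definition flat_substs :: "(nat \<Rightarrow> fml) set" where
  "flat_substs = {s. is_subst s \<and> (\<forall>p. flat (s p))}"

definition projective :: "(nat \<Rightarrow> fml) set \<Rightarrow> fml \<Rightarrow> bool" where
  "projective S f \<longleftrightarrow> (\<exists>s\<in>S. entails [] (subst s f) \<and>
     (\<forall>p. entails [f, s p] (Var p) \<and> entails [f, Var p] (s p)))"

definition lit :: "nat \<Rightarrow> bool \<Rightarrow> fml" where
  "lit p b = (if b then Var p else Neg (Var p))"

fun conjs :: "fml list \<Rightarrow> fml" where
  "conjs [] = Top"
| "conjs [f] = f"
| "conjs (f # fs) = Conj f (conjs fs)"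

fun tensors :: "fml list \<Rightarrow> fml" where
  "tensors [] = Bot"
| "tensors [f] = f"
| "tensors (f # fs) = Tensor f (tensors fs)"

text \<open>\<Theta>_X for a team X on the variables ps, given as an enumeration xs of X.\<close>
definition Theta :: "nat list \<Rightarrow> valuation list \<Rightarrow> fml" where
  "Theta ps xs = tensors (map (\<lambda>v. conjs (map (\<lambda>p. lit p (v p)) ps)) xs)"

end

theory Submission
  imports Defs
begin

lemma sat_empty: "sat {} f"
  by (induction f) auto

lemma flatD: "flat f \<Longrightarrow> sat X f = (\<forall>v\<in>X. sat {v} f)"
  unfolding flat_def by blast

lemma flat_Var: "flat (Var p)" unfolding flat_def by auto
lemma flat_Top: "flat Top" unfolding flat_def by auto
lemma flat_Bot: "flat Bot" unfolding flat_def by auto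
lemma flat_Neg: "flat (Neg f)" unfolding flat_def by auto
lemma flat_Conj:
  assumes "flat f" "flat g" shows "flat (Conj f g)"
  unfolding flat_def
proof
  fix X
  have a: "sat X f = (\<forall>v\<in>X. sat {v} f)" by (rule flatD[OF assms(1)])
  have b: "sat X g = (\<forall>v\<in>X. sat {v} g)" by (rule flatD[OF assms(2)])
  show "sat X (Conj f g) = (\<forall>v\<in>X. sat {v} (Conj f g))"
    unfolding sat.simps(6) a b by blast
qed

lemma sat_Tensor_flat:
  assumes "flat f" "flat g"
  shows "sat X (Tensor f g) = (\<forall>w\<in>X. sat {w} f \<or> sat {w} g)"
proof
  assume "sat X (Tensor f g)"
  then obtain Y Z where XYZ: "X = Y \<union> Z" "sat Y f" "sat Z g" by auto
  have "\<forall>w\<in>Y. sat {w} f" using flatD[OF assms(1), of Y] XYZ(2) by (rule iffD1)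
  moreover have "\<forall>w\<in>Z. sat {w} g" using flatD[OF assms(2), of Z] XYZ(3) by (rule iffD1)
  ultimately show "\<forall>w\<in>X. sat {w} f \<or> sat {w} g" using XYZ(1) by blast
next
  assume h: "\<forall>w\<in>X. sat {w} f \<or> sat {w} g"
  let ?Y = "{w\<in>X. sat {w} f}" and ?Z = "{w\<in>X. \<not> sat {w} f}"
  have "X = ?Y \<union> ?Z" by auto
  moreover have "sat ?Y f" by (rule iffD2[OF flatD[OF assms(1), of ?Y]]) blast
  moreover have "sat ?Z g"
  proof -
    have "\<forall>w\<in>?Z. sat {w} g" using h by blast
    then show ?thesis by (rule iffD2[OF flatD[OF assms(2), of ?Z]])
  qed
  ultimately show "sat X (Tensor f g)" unfolding sat.simps(7) by blast
qed

lemma flat_Tensor: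
  assumes "flat f" "flat g" shows "flat (Tensor f g)"
  unfolding flat_def[of "Tensor f g"] sat_Tensor_flat[OF assms] by blast

lemma img_split:
  assumes "f ` X = A \<union> B"
  shows "f ` {x\<in>X. f x \<in> A} = A \<and> f ` {x\<in>X. f x \<in> B} = B \<and> X = {x\<in>X. f x \<in> A} \<union> {x\<in>X. f x \<in> B}"
proof (intro conjI)
  show "f ` {x\<in>X. f x \<in> A} = A"
  proof
    show "A \<subseteq> f ` {x\<in>X. f x \<in> A}"
    proof
      fix a assume "a \<in> A"
      then have "a \<in> f ` X" using assms by simp
      then obtain x where "x \<in> X" "a = f x" by auto
      then show "a \<in> f ` {x\<in>X. f x \<in> A}" using \<open>a\<in>A\<close> by auto
    qed
  qed auto
  show "f ` {x\<in>X. f x \<in> B} = B"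
  proof
    show "B \<subseteq> f ` {x\<in>X. f x \<in> B}"
    proof
      fix a assume "a \<in> B"
      then have "a \<in> f ` X" using assms by simp
      then obtain x where "x \<in> X" "a = f x" by auto
      then show "a \<in> f ` {x\<in>X. f x \<in> B}" using \<open>a\<in>B\<close> by auto
    qed
  qed auto
  show "X = {x\<in>X. f x \<in> A} \<union> {x\<in>X. f x \<in> B}"
  proof -
    have "f x \<in> A \<union> B" if "x \<in> X" for x using assms that by (metis imageI)
    then show ?thesis by auto
  qed
qed

definition vals :: "(nat \<Rightarrow> fml) \<Rightarrow> valuation \<Rightarrow> valuation" where
  "vals s w = (\<lambda>p. sat {w} (s p))"

lemma subst_sat:
  assumes fl: "\<And>p. flat (s p)"
  shows "sat X (subst s f) = sat (vals s ` X) f"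
proof (induction f arbitrary: X)
  case (Var p)
  have "sat X (s p) = (\<forall>v\<in>X. sat {v} (s p))" by (rule flatD[OF fl])
  then show ?case unfolding vals_def by auto
next
  case (Dep as b)
  have "sat X (subst s (Dep as b)) =
    (\<forall>v\<in>X. \<forall>v'\<in>X. (\<forall>a\<in>set as. sat {vals s v} a = sat {vals s v'} a)
       \<longrightarrow> sat {vals s v} b = sat {vals s v'} b)"
  proof -
    have "sat {v} (subst s a) = sat {vals s v} a" if "a \<in> set as" for a v
      using Dep.IH(1)[OF that, of "{v}"] by simp
    moreover have "sat {v} (subst s b) = sat {vals s v} b" for v
      using Dep.IH(2)[of "{v}"] by simp
    ultimately show ?thesis by simp
  qed
  also have "\<dots> = sat (vals s ` X) (Dep as b)" by simp
  finally show ?case .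
next
  case (Neg f)
  then show ?case by simp
next
  case (Tensor f g)
  show ?case
  proof
    assume "sat X (subst s (Tensor f g))"
    then obtain Y Z where "X = Y \<union> Z" "sat Y (subst s f)" "sat Z (subst s g)" by auto
    moreover have "sat (vals s ` Y) f" using Tensor.IH(1)[of Y] \<open>sat Y (subst s f)\<close> by simp
    moreover have "sat (vals s ` Z) g" using Tensor.IH(2)[of Z] \<open>sat Z (subst s g)\<close> by simp
    ultimately show "sat (vals s ` X) (Tensor f g)" unfolding sat.simps(7)
      by (metis image_Un)
  next
    assume "sat (vals s ` X) (Tensor f g)"
    then obtain A B where AB: "vals s ` X = A \<union> B" "sat A f" "sat B g" by auto
    let ?Y = "{w\<in>X. vals s w \<in> A}" and ?Z = "{w\<in>X. vals s w \<in> B}"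
    have sp: "vals s ` ?Y = A" "vals s ` ?Z = B" "X = ?Y \<union> ?Z"
      using img_split[OF AB(1)] by auto
    have "sat ?Y (subst s f)" using Tensor.IH(1)[of ?Y] AB(2) sp(1) by simp
    moreover have "sat ?Z (subst s g)" using Tensor.IH(2)[of ?Z] AB(3) sp(2) by simp
    ultimately show "sat X (subst s (Tensor f g))" unfolding subst.simps sat.simps(7)
      using sp(3) by blast
  qed
qed auto

lemma flat_subst:
  assumes fl: "\<And>p. flat (s p)" and ff: "flat f"
  shows "flat (subst s f)"
  unfolding flat_def
proof
  fix X
  have "sat X (subst s f) = sat (vals s ` X) f" by (rule subst_sat[OF fl])
  also have "\<dots> = (\<forall>u\<in>vals s ` X. sat {u} f)" by (rule flatD[OF ff])
  also have "\<dots> = (\<forall>v\<in>X. sat {vals s v} f)" by blast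
  also have "\<dots> = (\<forall>v\<in>X. sat {v} (subst s f))"
    using subst_sat[OF fl, where f=f] by simp
  finally show "sat X (subst s f) = (\<forall>v\<in>X. sat {v} (subst s f))" .
qed

lemma is_subst_flat:
  assumes "\<forall>p. wf (s p)" "\<And>p. flat (s p)"
  shows "is_subst s"
  unfolding is_subst_def
proof (intro allI impI)
  fix f assume "wf f"
  then show "wf (subst s f)" using assms(1)
    by (induction f) (auto intro: flat_subst[OF assms(2)])
qed

lemma conjs_lits:
  "sat Y (conjs (map (\<lambda>p. lit p (v p)) ps)) = (\<forall>w\<in>Y. \<forall>p\<in>set ps. w p = v p)"
proof (induction ps)
  case (Cons a ps)
  show ?case
  proof (cases ps)
    case Nil
    then show ?thesis by (auto simp: lit_def)
  next
    case (Cons b qs)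
    have "conjs (map (\<lambda>p. lit p (v p)) (a # ps)) = Conj (lit a (v a)) (conjs (map (\<lambda>p. lit p (v p)) ps))"
      using Cons by simp
    then show ?thesis using Cons.IH by (auto simp: lit_def)
  qed
qed simp

lemma flat_conjs_lits: "flat (conjs (map (\<lambda>p. lit p (v p)) ps))"
  unfolding flat_def conjs_lits by auto

lemma wf_conjs_lits: "wf (conjs (map (\<lambda>p. lit p (v p)) ps))"
proof (induction ps)
  case (Cons a ps)
  show ?case
  proof (cases ps)
    case Nil
    then show ?thesis by (simp add: lit_def)
  next
    case (Cons b qs)
    have "conjs (map (\<lambda>p. lit p (v p)) (a # ps)) = Conj (lit a (v a)) (conjs (map (\<lambda>p. lit p (v p)) ps))"
      using Cons by simp
    then show ?thesis using Cons.IH by (simp add: lit_def)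
  qed
qed simp

lemma tensors_sat:
  assumes "fs \<noteq> []" "\<And>f. f \<in> set fs \<Longrightarrow> flat f"
  shows "sat Y (tensors fs) = (\<forall>w\<in>Y. \<exists>f\<in>set fs. sat {w} f)"
  using assms
proof (induction fs arbitrary: Y rule: tensors.induct)
  case (2 f)
  have "flat f" using 2 by simp
  then show ?case using flatD[of f Y] by simp
next
  case (3 f g fs)
  have ih: "sat Y' (tensors (g # fs)) = (\<forall>w\<in>Y'. \<exists>h\<in>set (g # fs). sat {w} h)" for Y'
    using 3 by simp
  have fl: "flat (tensors (g # fs))"
    unfolding flat_def ih by auto
  have ff: "flat f" using 3(3) by simp
  have "sat Y (tensors (f # g # fs)) = sat Y (Tensor f (tensors (g # fs)))" by simp
  also have "\<dots> = (\<forall>w\<in>Y. sat {w} f \<or> sat {w} (tensors (g # fs)))"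
    by (rule sat_Tensor_flat[OF ff fl])
  also have "\<dots> = (\<forall>w\<in>Y. \<exists>h\<in>set (f # g # fs). sat {w} h)"
    unfolding ih by auto
  finally show ?case .
qed auto

lemma wf_tensors: "\<forall>f\<in>set fs. wf f \<Longrightarrow> wf (tensors fs)"
  by (induction fs rule: tensors.induct) auto

theorem lemma4p5:
  fixes ps :: "nat list" and xs :: "valuation list"
  assumes "ps \<noteq> []" and "distinct ps"
    and "xs \<noteq> []" and "distinct xs"
    and "\<forall>v\<in>set xs. \<forall>p. p \<notin> set ps \<longrightarrow> \<not> v p"
  shows "projective flat_substs (Theta ps xs)"
proof -
  define S where "S = {w. \<exists>v\<in>set xs. \<forall>p\<in>set ps. w p = v p}"
  define T where "T = Theta ps xs"
  have satT: "sat Y T = (Y \<subseteq> S)" for Y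
    unfolding T_def Theta_def S_def using assms(3)
    by (subst tensors_sat) (auto simp: flat_conjs_lits conjs_lits)
  have flT: "flat T" unfolding flat_def satT by auto
  have wfT: "wf T" unfolding T_def Theta_def
    by (rule wf_tensors) (auto simp: wf_conjs_lits)
  obtain v0 where v0: "v0 \<in> set xs" using assms(3) by (cases xs) auto
  define s where "s p = Tensor (Conj T (Var p)) (Conj (Neg T) (if v0 p then Top else Bot))" for p
  have fls: "flat (s p)" for p unfolding s_def
    by (auto intro!: flat_Tensor flat_Conj flT flat_Var flat_Neg flat_Top flat_Bot)
  have wfs: "\<forall>p. wf (s p)" unfolding s_def using wfT by (auto simp: lit_def)
  have sing: "sat {w} (s p) = ((w \<in> S \<and> w p) \<or> (w \<notin> S \<and> v0 p))" for w p
    unfolding s_def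
    by (subst sat_Tensor_flat) (auto intro!: flat_Conj flT flat_Var flat_Neg
        flat_Top flat_Bot simp: satT)
  have sflat: "sat X (s p) = (\<forall>w\<in>X. sat {w} (s p))" for X p
    by (rule flatD[OF fls])
  have key: "sat X (s p) = (\<forall>w\<in>X. (w \<in> S \<and> w p) \<or> (w \<notin> S \<and> v0 p))" for X p
    unfolding sflat[of X p] sing by (rule refl)
  have vS: "vals s w \<in> S" for w
  proof (cases "w \<in> S")
    case True
    then have "vals s w = (\<lambda>p. w p)" unfolding vals_def sing by simp
    then show ?thesis using True by simp
  next
    case False
    then have "vals s w = v0" unfolding vals_def sing by simp
    then show ?thesis using v0 unfolding S_def by auto
  qed
  have iss: "is_subst s" using is_subst_flat[OF wfs fls] .
  have "s \<in> flat_substs" unfolding flat_substs_def using iss fls by auto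
  moreover have "entails [] (subst s T)"
    unfolding entails_def using iss wfT
    by (auto simp: subst_sat[OF fls] satT vS is_subst_def)
  moreover have "entails [T, s p] (Var p)" for p
    unfolding entails_def using wfT wfs
    by (auto simp: satT key)
  moreover have "entails [T, Var p] (s p)" for p
    unfolding entails_def using wfT wfs
    by (auto simp: satT key)
  ultimately show ?thesis unfolding projective_def T_def[symmetric] by blast
qed

end
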